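(* Let $q$ be a prime power and $4\le h\le k$ integers. Let $1\le s\le h$, let $i_1,\ldots,i_s$ be distinct indices in $\{1,\ldots,h\}$ and $a_{i_1},\ldots,a_{i_s}\in\mathbb{F}_q^*$. Suppose the coefficients $a_{i_1},\ldots,a_{i_s}$ take exactly $l\ge 1$ distinct values, taken $r_1,\ldots,r_l\ge 1$ times respectively (so $r_1+\cdots+r_l=s$). Let $\Lambda$ be the number of $(x_1,\ldots,x_k)\in\mathbb{F}_q^k$ satisfying $$a_{i_1}x_{i_1}+\cdots+a_{i_s}x_{i_s}=0\quad\text{and}\quad (x_1+\cdots+x_h)\,x_1x_2\cdots x_h=0.$$ Then $$\Lambda=q^{k-1}-(q-1)^{h-s}q^{k-h}\psi_{s}+q^{k-h}A_{r_1,\ldots,r_l,h-s}.$$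
   Context: For $m\ge 0$, $\psi_m$ is the number of $(x_1,\ldots,x_m)\in\mathbb{F}_q^m$ with $\sum x_i=0$ and all $x_i\ne0$; $\varphi_m$ is the number of such tuples with $\sum x_i=1$ and all $x_i\ne 0$ ($\psi_0=1$, $\varphi_0=0$). For positive integers $r_1,\ldots,r_m$ define recursively $A_{r_1}=\psi_{r_1}$ and $A_{r_1,\ldots,r_m}=\psi_{r_1+\cdots+r_{m-1}}\varphi_{r_m}+(-1)^{r_m}A_{r_1,\ldots,r_{m-1}}$ for $m\ge 2$; moreover, for positive $r_1,\ldots,r_l$, the symbol $A_{r_1,\ldots,r_l,0}$ denotes $A_{r_1,\ldots,r_l}$. *)

theory Defs
  imports "HOL-Library.FuncSet"
begin

definition psi :: "'a::{finite,field} itself \<Rightarrow> nat \<Rightarrow> int" where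
  "psi T m = int (card {x \<in> {..<m} \<rightarrow>\<^sub>E (UNIV::'a set).
       (\<Sum>i<m. x i) = 0 \<and> (\<forall>i<m. x i \<noteq> 0)})"

definition phi :: "'a::{finite,field} itself \<Rightarrow> nat \<Rightarrow> int" where
  "phi T m = int (card {x \<in> {..<m} \<rightarrow>\<^sub>E (UNIV::'a set).
       (\<Sum>i<m. x i) = 1 \<and> (\<forall>i<m. x i \<noteq> 0)})"

text \<open>Recursion on the reversed list: Arev T [r_m, ..., r_1] = A_{r_1,...,r_m}.\<close>
fun Arev :: "'a::{finite,field} itself \<Rightarrow> nat list \<Rightarrow> int" where
  "Arev T [] = 0"
| "Arev T [r] = psi T r"
| "Arev T (r # r' # rs) = psi T (sum_list (r' # rs)) * phi T r + (-1) ^ r * Arev T (r' # rs)"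

definition A :: "'a::{finite,field} itself \<Rightarrow> nat list \<Rightarrow> int" where
  "A T rs = Arev T (rev rs)"

definition A_ext :: "'a::{finite,field} itself \<Rightarrow> nat list \<Rightarrow> nat \<Rightarrow> int" where
  "A_ext T rs t = (if t = 0 then A T rs else A T (rs @ [t]))"

end

theory Submission
  imports Defs
begin

lemma split_card:
  fixes P :: "(nat \<Rightarrow> 'a::finite) \<Rightarrow> bool"
  assumes "finite I" "finite J" "I \<inter> J = {}"
  shows "card {x \<in> (I \<union> J) \<rightarrow>\<^sub>E (UNIV::'a set). P x}
       = (\<Sum>y\<in>I \<rightarrow>\<^sub>E UNIV. card {z \<in> J \<rightarrow>\<^sub>E UNIV. P (\<lambda>i. if i \<in> I then y i else z i)})"
proof -
  let ?m = "\<lambda>(y::nat\<Rightarrow>'a, z::nat\<Rightarrow>'a). (\<lambda>i. if i \<in> I then y i else z i)"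
  let ?Sg = "SIGMA y:I \<rightarrow>\<^sub>E (UNIV::'a set). {z \<in> J \<rightarrow>\<^sub>E UNIV. P (\<lambda>i. if i \<in> I then y i else z i)}"
  have fin: "finite (I \<rightarrow>\<^sub>E (UNIV::'a set))" using assms by (simp add: finite_PiE)
  have "(\<Sum>y\<in>I \<rightarrow>\<^sub>E UNIV. card {z \<in> J \<rightarrow>\<^sub>E UNIV. P (\<lambda>i. if i \<in> I then y i else z i)}) = card ?Sg"
    using fin assms by (subst card_SigmaI) (auto simp: finite_PiE)
  also have "card ?Sg = card (?m ` ?Sg)"
  proof (rule card_image[symmetric], rule inj_onI)
    fix p p' assume a0: "p \<in> ?Sg" "p' \<in> ?Sg" and eq0: "?m p = ?m p'"
    obtain y z where p: "p = (y, z)" by (cases p)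
    obtain y' z' where p': "p' = (y', z')" by (cases p')
    have a1: "(y, z) \<in> ?Sg" "(y', z') \<in> ?Sg" using a0 p p' by auto
    have eq: "(\<lambda>i. if i \<in> I then y i else z i) = (\<lambda>i. if i \<in> I then y' i else z' i)"
      using eq0 p p' by simp
    have "y i = y' i \<and> z i = z' i" for i
    proof -
      have e: "(if i \<in> I then y i else z i) = (if i \<in> I then y' i else z' i)" using eq by meson
      have y: "y \<in> I \<rightarrow>\<^sub>E UNIV" "y' \<in> I \<rightarrow>\<^sub>E UNIV" "z \<in> J \<rightarrow>\<^sub>E UNIV" "z' \<in> J \<rightarrow>\<^sub>E UNIV"
        using a1 by auto
      show ?thesis
      proof (cases "i \<in> I")
        case True
        then have "i \<notin> J" using assms(3) by blast
        then show ?thesis using True e y PiE_arb[of z J "\<lambda>_. UNIV" i] PiE_arb[of z' J "\<lambda>_. UNIV" i] by simp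
      next
        case False
        then show ?thesis using e y PiE_arb[of y I "\<lambda>_. UNIV" i] PiE_arb[of y' I "\<lambda>_. UNIV" i] by simp
      qed
    qed
    then show "p = p'" using p p' by auto
  qed
  also have "?m ` ?Sg = {x \<in> (I \<union> J) \<rightarrow>\<^sub>E (UNIV::'a set). P x}"
  proof (rule set_eqI, rule iffI)
    fix x assume "x \<in> ?m ` ?Sg"
    then show "x \<in> {x \<in> (I \<union> J) \<rightarrow>\<^sub>E (UNIV::'a set). P x}"
      by (auto simp: PiE_iff extensional_def)
  next
    fix x assume x: "x \<in> {x \<in> (I \<union> J) \<rightarrow>\<^sub>E (UNIV::'a set). P x}"
    have "x = ?m (restrict x I, restrict x J)"
      using x by (auto simp: PiE_iff extensional_def fun_eq_iff)
    moreover have "(restrict x I, restrict x J) \<in> ?Sg"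
      using x assms(3) by (auto simp: PiE_iff extensional_def elim!: back_subst[where P=P])
    ultimately show "x \<in> ?m ` ?Sg" by blast
  qed
  finally show ?thesis by simp
qed

lemma insert_card:
  fixes P :: "(nat \<Rightarrow> 'a::finite) \<Rightarrow> bool"
  assumes "finite I" "j \<notin> I"
  shows "card {x \<in> (insert j I) \<rightarrow>\<^sub>E (UNIV::'a set). P x}
       = (\<Sum>y\<in>I \<rightarrow>\<^sub>E UNIV. card {t. P (y(j:=t))})"
proof -
  let ?m = "\<lambda>(y::nat\<Rightarrow>'a, t::'a). y(j:=t)"
  let ?Sg = "SIGMA y:I \<rightarrow>\<^sub>E (UNIV::'a set). {t. P (y(j:=t))}"
  have fin: "finite (I \<rightarrow>\<^sub>E (UNIV::'a set))" using assms by (simp add: finite_PiE)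
  have "(\<Sum>y\<in>I \<rightarrow>\<^sub>E UNIV. card {t. P (y(j:=t))}) = card ?Sg"
    using fin assms by (subst card_SigmaI) auto
  also have "card ?Sg = card (?m ` ?Sg)"
  proof (rule card_image[symmetric], rule inj_onI)
    fix p p' assume a0: "p \<in> ?Sg" "p' \<in> ?Sg" and eq0: "?m p = ?m p'"
    obtain y t where p: "p = (y, t)" by (cases p)
    obtain y' t' where p': "p' = (y', t')" by (cases p')
    have a1: "(y, t) \<in> ?Sg" "(y', t') \<in> ?Sg" using a0 p p' by auto
    have eq: "y(j:=t) = y'(j:=t')" using eq0 p p' by simp
    have "y i = y' i" for i
    proof -
      have e: "(y(j:=t)) i = (y'(j:=t')) i" using eq by simp
      have y: "y \<in> I \<rightarrow>\<^sub>E UNIV" "y' \<in> I \<rightarrow>\<^sub>E UNIV" using a1 by auto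
      show ?thesis
      proof (cases "i = j")
        case True
        then show ?thesis using assms(2) y PiE_arb[of y I "\<lambda>_. UNIV" i] PiE_arb[of y' I "\<lambda>_. UNIV" i] by simp
      next
        case False
        then show ?thesis using e by simp
      qed
    qed
    moreover have "t = t'" using fun_cong[OF eq, of j] by simp
    ultimately show "p = p'" using p p' by auto
  qed
  also have "?m ` ?Sg = {x \<in> (insert j I) \<rightarrow>\<^sub>E (UNIV::'a set). P x}"
  proof (rule set_eqI, rule iffI)
    fix x assume "x \<in> ?m ` ?Sg"
    then obtain y t where yt: "x = y(j:=t)" "y \<in> I \<rightarrow>\<^sub>E UNIV" "P (y(j:=t))" by auto
    then show "x \<in> {x \<in> (insert j I) \<rightarrow>\<^sub>E (UNIV::'a set). P x}"
      using PiE_fun_upd[of t "\<lambda>_. UNIV" j y I] by auto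
  next
    fix x assume x: "x \<in> {x \<in> (insert j I) \<rightarrow>\<^sub>E (UNIV::'a set). P x}"
    have "x = ?m (x(j:=undefined), x j)" by simp
    moreover have "(x(j:=undefined), x j) \<in> ?Sg"
      using x assms(2) by (auto intro: fun_upd_in_PiE)
    ultimately show "x \<in> ?m ` ?Sg" by blast
  qed
  finally show ?thesis by (rule sym)
qed

definition nzc :: "nat set \<Rightarrow> 'a::{finite,field} \<Rightarrow> nat" where
  "nzc I w = card {x \<in> I \<rightarrow>\<^sub>E (UNIV::'a set). (\<forall>i\<in>I. x i \<noteq> 0) \<and> sum x I = w}"

lemma card_split:
  assumes "finite B"
  shows "card {x\<in>B. P x} = card {x\<in>B. P x \<and> Q x} + card {x\<in>B. P x \<and> \<not> Q x}"
proof -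
  have "{x\<in>B. P x} = {x\<in>B. P x \<and> Q x} \<union> {x\<in>B. P x \<and> \<not> Q x}" by auto
  moreover have "card ({x\<in>B. P x \<and> Q x} \<union> {x\<in>B. P x \<and> \<not> Q x})
      = card {x\<in>B. P x \<and> Q x} + card {x\<in>B. P x \<and> \<not> Q x}"
    by (rule card_Un_disjoint) (use assms in auto)
  ultimately show ?thesis by simp
qed

lemma sum_if_card:
  assumes "finite B"
  shows "(\<Sum>x\<in>B. if P x then (c::'b::comm_semiring_1) else 0) = of_nat (card {x\<in>B. P x}) * c"
  using sum.inter_filter[OF assms, of "\<lambda>_. c" P] by simp

lemma sum_restrict_same: "sum (restrict f I) I = sum f I"
  by (rule sum.cong) auto

lemma sum_upd_insert:
  assumes "finite I" "j \<notin> I"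
  shows "sum (y(j:=t)) (insert j I) = t + sum y I"
proof -
  have "sum (y(j:=t)) I = sum y I" using assms by (intro sum.cong) auto
  then show ?thesis using assms by simp
qed

lemma card_allnz:
  assumes "finite I"
  shows "card {x \<in> I \<rightarrow>\<^sub>E (UNIV::'a::{finite,field} set). \<forall>i\<in>I. x i \<noteq> 0}
       = (card (UNIV::'a set) - 1) ^ card I"
proof -
  have "{x \<in> I \<rightarrow>\<^sub>E (UNIV::'a set). \<forall>i\<in>I. x i \<noteq> 0} = I \<rightarrow>\<^sub>E (UNIV - {0})"
    by (auto simp: PiE_iff extensional_def)
  moreover have "card (UNIV - {0::'a}) = card (UNIV::'a set) - 1"
    by (simp add: card_Diff_singleton)
  ultimately show ?thesis using assms by (simp add: card_PiE)
qed

lemma nzc_insert: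
  assumes "finite I" "j \<notin> I"
  shows "int (nzc (insert j I) (w::'a::{finite,field}))
       = (int (card (UNIV::'a set)) - 1) ^ card I - int (nzc I w)"
proof -
  let ?A = "I \<rightarrow>\<^sub>E (UNIV::'a set)"
  have finA: "finite ?A" using assms by (simp add: finite_PiE)
  have "nzc (insert j I) w = (\<Sum>y\<in>?A. card {t. (\<forall>i\<in>insert j I. (y(j:=t)) i \<noteq> 0)
          \<and> sum (y(j:=t)) (insert j I) = w})"
    unfolding nzc_def by (rule insert_card[OF assms])
  also have "\<dots> = (\<Sum>y\<in>?A. if (\<forall>i\<in>I. y i \<noteq> 0) \<and> sum y I \<noteq> w then 1 else 0)"
  proof (rule sum.cong[OF refl])
    fix y assume y: "y \<in> ?A"
    have nz: "(\<forall>i\<in>insert j I. (y(j:=t)) i \<noteq> 0) \<longleftrightarrow> t \<noteq> 0 \<and> (\<forall>i\<in>I. y i \<noteq> 0)" for t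
      using assms(2) by auto
    have sm: "sum (y(j:=t)) (insert j I) = w \<longleftrightarrow> t = w - sum y I" for t
      using sum_upd_insert[OF assms, of y t] by (auto simp: algebra_simps)
    show "card {t. (\<forall>i\<in>insert j I. (y(j:=t)) i \<noteq> 0) \<and> sum (y(j:=t)) (insert j I) = w}
        = (if (\<forall>i\<in>I. y i \<noteq> 0) \<and> sum y I \<noteq> w then 1 else 0)"
    proof (cases "(\<forall>i\<in>I. y i \<noteq> 0) \<and> sum y I \<noteq> w")
      case True
      have "{t. (\<forall>i\<in>insert j I. (y(j:=t)) i \<noteq> 0) \<and> sum (y(j:=t)) (insert j I) = w}
          = {w - sum y I}"
        by (simp only: nz sm) (use True in auto)
      note s = this
      show ?thesis unfolding s using True by simp
    next
      case False
      have "{t. (\<forall>i\<in>insert j I. (y(j:=t)) i \<noteq> 0) \<and> sum (y(j:=t)) (insert j I) = w}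
          = {}"
        by (simp only: nz sm) (use False in auto)
      note s = this
      show ?thesis unfolding s using False by simp
    qed
  qed
  also have "\<dots> = card {y\<in>?A. (\<forall>i\<in>I. y i \<noteq> 0) \<and> sum y I \<noteq> w}"
    using sum_if_card[OF finA, where c="1::nat"] by simp
  finally have 1: "nzc (insert j I) w = card {y\<in>?A. (\<forall>i\<in>I. y i \<noteq> 0) \<and> sum y I \<noteq> w}" .
  have 2: "card {y\<in>?A. (\<forall>i\<in>I. y i \<noteq> 0)} = nzc I w + card {y\<in>?A. (\<forall>i\<in>I. y i \<noteq> 0) \<and> sum y I \<noteq> w}"
    unfolding nzc_def by (rule card_split[OF finA])
  have 3: "card (UNIV::'a set) \<ge> 1" using finite_UNIV_card_ge_0[where 'a='a] by simp
  have 4: "int ((card (UNIV::'a set) - 1) ^ card I) = (int (card (UNIV::'a set)) - 1) ^ card I"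
    using 3 by (simp add: of_nat_diff)
  have 5: "(card (UNIV::'a set) - 1) ^ card I = nzc I w + nzc (insert j I) w"
    using 1 2 card_allnz[OF assms(1), where 'a='a] by simp
  then have "int ((card (UNIV::'a set) - 1) ^ card I) = int (nzc I w) + int (nzc (insert j I) w)"
    by (metis of_nat_add)
  then show ?thesis using 4 by linarith
qed

lemma nzc_eq_lessThan:
  assumes "finite I"
  shows "nzc I (w::'a::{finite,field}) = nzc {..<card I} w"
  using assms
proof (induction I rule: finite_induct)
  case empty
  then show ?case by simp
next
  case (insert j F)
  have "int (nzc (insert j F) w) = (int (card (UNIV::'a set)) - 1) ^ card F - int (nzc F w)"
    by (rule nzc_insert[OF insert(1,2)])
  also have "\<dots> = (int (card (UNIV::'a set)) - 1) ^ card {..<card F} - int (nzc {..<card F} w)"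
    using insert(3) by simp
  also have "\<dots> = int (nzc (insert (card F) {..<card F}) w)"
    by (rule nzc_insert[symmetric]) auto
  finally show ?case using insert(1,2) by (simp add: lessThan_Suc)
qed

lemma psi_nzc: "psi TYPE('a::{finite,field}) n = int (nzc {..<n} (0::'a))"
  unfolding psi_def nzc_def by (simp add: conj_commute Ball_def)

lemma phi_nzc: "phi TYPE('a::{finite,field}) n = int (nzc {..<n} (1::'a))"
  unfolding phi_def nzc_def by (simp add: conj_commute Ball_def)

lemma scale_card:
  fixes d :: "nat \<Rightarrow> 'a::field"
  assumes "\<forall>i\<in>I. d i \<noteq> 0"
  shows "card {x \<in> I \<rightarrow>\<^sub>E (UNIV::'a set). P (restrict (\<lambda>i. d i * x i) I)}
       = card {y \<in> I \<rightarrow>\<^sub>E (UNIV::'a set). P y}"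
proof (rule bij_betw_same_card[of "\<lambda>x. restrict (\<lambda>i. d i * x i) I"],
       rule bij_betw_byWitness[where f'="\<lambda>y. restrict (\<lambda>i. y i / d i) I"])
  show "\<forall>a\<in>{x \<in> I \<rightarrow>\<^sub>E UNIV. P (restrict (\<lambda>i. d i * x i) I)}.
          restrict (\<lambda>i. restrict (\<lambda>i. d i * a i) I i / d i) I = a"
    using assms by (auto simp: fun_eq_iff PiE_iff extensional_def)
  show "\<forall>a'\<in>{y \<in> I \<rightarrow>\<^sub>E UNIV. P y}. restrict (\<lambda>i. d i * restrict (\<lambda>i. a' i / d i) I i) I = a'"
    using assms by (auto simp: fun_eq_iff PiE_iff extensional_def)
  show "(\<lambda>x. restrict (\<lambda>i. d i * x i) I) ` {x \<in> I \<rightarrow>\<^sub>E UNIV. P (restrict (\<lambda>i. d i * x i) I)}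
        \<subseteq> {y \<in> I \<rightarrow>\<^sub>E UNIV. P y}"
    by auto
  show "(\<lambda>y. restrict (\<lambda>i. y i / d i) I) ` {y \<in> I \<rightarrow>\<^sub>E UNIV. P y}
        \<subseteq> {x \<in> I \<rightarrow>\<^sub>E UNIV. P (restrict (\<lambda>i. d i * x i) I)}"
  proof
    fix x assume "x \<in> (\<lambda>y. restrict (\<lambda>i. y i / d i) I) ` {y \<in> I \<rightarrow>\<^sub>E UNIV. P y}"
    then obtain y where y: "y \<in> I \<rightarrow>\<^sub>E UNIV" "P y" "x = restrict (\<lambda>i. y i / d i) I" by auto
    have "restrict (\<lambda>i. d i * x i) I = y"
      using y assms by (auto simp: fun_eq_iff PiE_iff extensional_def)
    then show "x \<in> {x \<in> I \<rightarrow>\<^sub>E UNIV. P (restrict (\<lambda>i. d i * x i) I)}" using y by auto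
  qed
qed

lemma nzc_scale:
  assumes "finite I" "w \<noteq> 0"
  shows "nzc I (w::'a::{finite,field}) = nzc I (1::'a)"
proof -
  have "nzc I w = card {x \<in> I \<rightarrow>\<^sub>E (UNIV::'a set).
      (\<lambda>y. (\<forall>i\<in>I. y i \<noteq> 0) \<and> sum y I = w) (restrict (\<lambda>i. w * x i) I)}"
    unfolding nzc_def by (rule scale_card[symmetric]) (use assms in auto)
  also have "\<dots> = nzc I (1::'a)"
  proof -
    have key: "((\<forall>i\<in>I. restrict (\<lambda>i. w * x i) I i \<noteq> 0) \<and> sum (restrict (\<lambda>i. w * x i) I) I = w)
       = ((\<forall>i\<in>I. x i \<noteq> 0) \<and> sum x I = 1)" for x :: "nat \<Rightarrow> 'a"
    proof -
      have "sum (restrict (\<lambda>i. w * x i) I) I = w * sum x I"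
        by (simp add: sum_restrict_same sum_distrib_left)
      then show ?thesis using assms(2) by auto
    qed
    show ?thesis unfolding nzc_def key by simp
  qed
  finally show ?thesis .
qed

lemma nzc_psi_phi:
  assumes "finite I"
  shows "int (nzc I (w::'a::{finite,field}))
       = (if w = 0 then psi TYPE('a) (card I) else phi TYPE('a) (card I))"
proof (cases "w = 0")
  case True
  then show ?thesis using nzc_eq_lessThan[OF assms, of w] by (simp add: psi_nzc)
next
  case False
  have "nzc I w = nzc {..<card I} (1::'a)"
    using nzc_scale[OF assms False] nzc_eq_lessThan[OF assms, of "1::'a"] by (rule trans)
  then show ?thesis using False by (simp add: phi_nzc)
qed

lemma psi_Suc: "psi TYPE('a::{finite,field}) (Suc n) = (int (card (UNIV::'a set)) - 1) ^ n - psi TYPE('a) n"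
  unfolding psi_nzc lessThan_Suc by (subst nzc_insert) auto

lemma phi_Suc: "phi TYPE('a::{finite,field}) (Suc n) = (int (card (UNIV::'a set)) - 1) ^ n - phi TYPE('a) n"
  unfolding phi_nzc lessThan_Suc by (subst nzc_insert) auto

lemma psi_phi_diff: "psi TYPE('a::{finite,field}) n - phi TYPE('a) n = (-1) ^ n"
proof (induction n)
  case 0
  have "psi TYPE('a) 0 = 1" unfolding psi_nzc nzc_def by simp
  moreover have "phi TYPE('a) 0 = 0" unfolding phi_nzc nzc_def by simp
  ultimately show ?case by simp
next
  case (Suc n)
  then show ?case by (simp add: psi_Suc phi_Suc algebra_simps)
qed

definition Tc :: "nat set \<Rightarrow> (nat \<Rightarrow> 'a::{finite,field}) \<Rightarrow> nat" where
  "Tc I c = card {x \<in> I \<rightarrow>\<^sub>E (UNIV::'a set).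
      (\<forall>i\<in>I. x i \<noteq> 0) \<and> (\<Sum>i\<in>I. c i * x i) = 0 \<and> sum x I = 0}"

lemma card_B_psi:
  fixes c :: "nat \<Rightarrow> 'a::{finite,field}"
  assumes "finite J" "\<forall>i\<in>J. c i \<noteq> 0"
  shows "int (card {y \<in> J \<rightarrow>\<^sub>E (UNIV::'a set). (\<forall>i\<in>J. y i \<noteq> 0) \<and> (\<Sum>i\<in>J. c i * y i) = 0})
       = psi TYPE('a) (card J)"
proof -
  have key: "((\<forall>i\<in>J. restrict (\<lambda>i. c i * x i) J i \<noteq> 0) \<and> sum (restrict (\<lambda>i. c i * x i) J) J = 0)
     = ((\<forall>i\<in>J. x i \<noteq> 0) \<and> (\<Sum>i\<in>J. c i * x i) = 0)" for x :: "nat \<Rightarrow> 'a"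
  proof -
    have "sum (restrict (\<lambda>i. c i * x i) J) J = (\<Sum>i\<in>J. c i * x i)"
      by (simp add: sum_restrict_same)
    then show ?thesis using assms(2) by auto
  qed
  have "nzc J (0::'a) = card {x \<in> J \<rightarrow>\<^sub>E (UNIV::'a set).
      (\<lambda>y. (\<forall>i\<in>J. y i \<noteq> 0) \<and> sum y J = 0) (restrict (\<lambda>i. c i * x i) J)}"
    unfolding nzc_def by (rule scale_card[symmetric]) (use assms in auto)
  also have "\<dots> = card {y \<in> J \<rightarrow>\<^sub>E (UNIV::'a set). (\<forall>i\<in>J. y i \<noteq> 0) \<and> (\<Sum>i\<in>J. c i * y i) = 0}"
    unfolding key by simp
  finally show ?thesis using nzc_psi_phi[OF assms(1), of "0::'a"] by simp
qed

lemma Tc_step: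
  fixes c :: "nat \<Rightarrow> 'a::{finite,field}"
  assumes "finite I"
  shows "int (Tc I c) = psi TYPE('a) (card {i\<in>I. c i \<noteq> v}) * phi TYPE('a) (card {i\<in>I. c i = v})
     + (-1) ^ card {i\<in>I. c i = v} * int (Tc {i\<in>I. c i \<noteq> v} (\<lambda>i. c i - v))"
proof -
  define G where "G = {i\<in>I. c i = v}"
  define I' where "I' = {i\<in>I. c i \<noteq> v}"
  have finG: "finite G" and finI': "finite I'" using assms by (auto simp: G_def I'_def)
  have disj: "I' \<inter> G = {}" and Ieq: "I = I' \<union> G" by (auto simp: G_def I'_def)
  have cG: "\<And>i. i \<in> G \<Longrightarrow> c i = v" and cI': "\<And>i. i \<in> I' \<Longrightarrow> c i - v \<noteq> 0"
    by (auto simp: G_def I'_def)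
  let ?P = "\<lambda>x::nat\<Rightarrow>'a. (\<forall>i\<in>I. x i \<noteq> 0) \<and> (\<Sum>i\<in>I. c i * x i) = 0 \<and> sum x I = 0"
  let ?B = "\<lambda>y::nat\<Rightarrow>'a. (\<forall>i\<in>I'. y i \<noteq> 0) \<and> (\<Sum>i\<in>I'. (c i - v) * y i) = 0"
  let ?A = "I' \<rightarrow>\<^sub>E (UNIV::'a set)"
  have finA: "finite ?A" using finI' by (simp add: finite_PiE)
  have "Tc I c = card {x \<in> (I' \<union> G) \<rightarrow>\<^sub>E (UNIV::'a set). ?P x}"
    unfolding Tc_def using Ieq by simp
  also have "\<dots> = (\<Sum>y\<in>?A. card {z \<in> G \<rightarrow>\<^sub>E UNIV. ?P (\<lambda>i. if i \<in> I' then y i else z i)})"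
    by (rule split_card[OF finI' finG disj])
  also have "\<dots> = (\<Sum>y\<in>?A. if ?B y then nzc G (- sum y I') else 0)"
  proof (rule sum.cong[OF refl])
    fix y assume y: "y \<in> ?A"
    have key: "?P (\<lambda>i. if i \<in> I' then y i else z i)
        \<longleftrightarrow> ?B y \<and> ((\<forall>i\<in>G. z i \<noteq> 0) \<and> sum z G = - sum y I')" for z
    proof -
      let ?m = "\<lambda>i. if i \<in> I' then y i else z i"
      have a1: "(\<forall>i\<in>I. ?m i \<noteq> 0) \<longleftrightarrow> (\<forall>i\<in>I'. y i \<noteq> 0) \<and> (\<forall>i\<in>G. z i \<noteq> 0)"
        using Ieq disj by auto
      have s1: "(\<Sum>i\<in>I'. c i * ?m i) = (\<Sum>i\<in>I'. c i * y i)" by (rule sum.cong) auto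
      have s2: "(\<Sum>i\<in>G. c i * ?m i) = v * sum z G"
        using disj cG by (auto simp: sum_distrib_left intro!: sum.cong)
      have a2: "(\<Sum>i\<in>I. c i * ?m i) = (\<Sum>i\<in>I'. c i * y i) + v * sum z G"
        unfolding Ieq by (subst sum.union_disjoint[OF finI' finG disj]) (simp add: s1 s2)
      have s3: "sum ?m I' = sum y I'" by (rule sum.cong) auto
      have s4: "sum ?m G = sum z G" using disj by (auto intro!: sum.cong)
      have a3: "sum ?m I = sum y I' + sum z G"
        unfolding Ieq by (subst sum.union_disjoint[OF finI' finG disj]) (simp add: s3 s4)
      have a4: "(\<Sum>i\<in>I'. (c i - v) * y i) = (\<Sum>i\<in>I'. c i * y i) - v * sum y I'"
        by (simp add: algebra_simps sum_subtractf sum_distrib_left)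
      have a5: "sum y I' + sum z G = 0 \<longleftrightarrow> sum z G = - sum y I'"
        by (auto simp: algebra_simps eq_neg_iff_add_eq_0)
      show ?thesis
      proof (cases "sum z G = - sum y I'")
        case True
        then show ?thesis unfolding a1 a2 a3 a4 a5 by (auto simp: algebra_simps)
      next
        case False
        then show ?thesis unfolding a1 a2 a3 a4 a5 by auto
      qed
    qed
    have "{z \<in> G \<rightarrow>\<^sub>E UNIV. ?P (\<lambda>i. if i \<in> I' then y i else z i)}
        = (if ?B y then {z \<in> G \<rightarrow>\<^sub>E (UNIV::'a set). (\<forall>i\<in>G. z i \<noteq> 0) \<and> sum z G = - sum y I'} else {})"
      by (simp only: key) auto
    then show "card {z \<in> G \<rightarrow>\<^sub>E UNIV. ?P (\<lambda>i. if i \<in> I' then y i else z i)}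
        = (if ?B y then nzc G (- sum y I') else 0)"
      unfolding nzc_def by simp
  qed
  finally have 1: "Tc I c = (\<Sum>y\<in>?A. if ?B y then nzc G (- sum y I') else 0)" .
  have "int (Tc I c) = (\<Sum>y\<in>?A. int (if ?B y then nzc G (- sum y I') else 0))"
    unfolding 1 by (simp add: of_nat_sum)
  also have "\<dots> = (\<Sum>y\<in>?A. (if ?B y then phi TYPE('a) (card G) else 0)
      + (if ?B y \<and> sum y I' = 0 then (-1) ^ card G else 0))"
  proof (rule sum.cong[OF refl])
    fix y :: "nat \<Rightarrow> 'a"
    have "int (nzc G (- sum y I')) = (if sum y I' = 0 then psi TYPE('a) (card G) else phi TYPE('a) (card G))"
      using nzc_psi_phi[OF finG, of "- sum y I'"] by simp
    then show "int (if ?B y then nzc G (- sum y I') else 0) = (if ?B y then phi TYPE('a) (card G) else 0)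
      + (if ?B y \<and> sum y I' = 0 then (-1) ^ card G else 0)"
      using psi_phi_diff[where 'a='a, of "card G"] by (auto simp: algebra_simps)
  qed
  also have "\<dots> = of_nat (card {y\<in>?A. ?B y}) * phi TYPE('a) (card G)
      + of_nat (card {y\<in>?A. ?B y \<and> sum y I' = 0}) * (-1) ^ card G"
    by (simp add: sum.distrib sum_if_card[OF finA])
  also have "card {y\<in>?A. ?B y \<and> sum y I' = 0} = Tc I' (\<lambda>i. c i - v)"
    unfolding Tc_def by (simp add: conj_assoc)
  also have "int (card {y\<in>?A. ?B y}) = psi TYPE('a) (card I')"
    by (rule card_B_psi[OF finI']) (use cI' in auto)
  finally show ?thesis by (simp add: G_def I'_def algebra_simps)
qed

lemma Tc_shift:
  fixes c :: "nat \<Rightarrow> 'a::{finite,field}"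
  shows "Tc I (\<lambda>i. c i - v) = Tc I c"
proof -
  have key: "((\<forall>i\<in>I. x i \<noteq> 0) \<and> (\<Sum>i\<in>I. (c i - v) * x i) = 0 \<and> sum x I = 0)
     = ((\<forall>i\<in>I. x i \<noteq> 0) \<and> (\<Sum>i\<in>I. c i * x i) = 0 \<and> sum x I = 0)" for x :: "nat \<Rightarrow> 'a"
  proof -
    have "(\<Sum>i\<in>I. (c i - v) * x i) = (\<Sum>i\<in>I. c i * x i) - v * sum x I"
      by (simp add: algebra_simps sum_subtractf sum_distrib_left)
    then show ?thesis by auto
  qed
  show ?thesis unfolding Tc_def key ..
qed

lemma card_partition_list:
  fixes c :: "nat \<Rightarrow> 'a"
  assumes "distinct vs" "finite J" "c ` J \<subseteq> set vs"
  shows "sum_list (map (\<lambda>u. card {i\<in>J. c i = u}) vs) = card J"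
proof -
  have "sum_list (map (\<lambda>u. card {i\<in>J. c i = u}) vs) = (\<Sum>u\<in>set vs. card {i\<in>J. c i = u})"
    by (rule sum_list_distinct_conv_sum_set[OF assms(1)])
  also have "\<dots> = card (\<Union>u\<in>set vs. {i\<in>J. c i = u})"
    by (rule card_UN_disjoint[symmetric]) (use assms(2) in auto)
  also have "(\<Union>u\<in>set vs. {i\<in>J. c i = u}) = J" using assms(3) by auto
  finally show ?thesis .
qed

lemma Tc_Arev:
  fixes c :: "nat \<Rightarrow> 'a::{finite,field}"
  assumes "distinct vs" "vs \<noteq> []" "finite I" "c ` I \<subseteq> set vs"
  shows "int (Tc I c) = Arev TYPE('a) (map (\<lambda>v. card {i\<in>I. c i = v}) vs)"
  using assms
proof (induction vs arbitrary: I c)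
  case Nil
  then show ?case by simp
next
  case (Cons v vs)
  show ?case
  proof (cases vs)
    case Nil
    then have cv: "\<forall>i\<in>I. c i = v" using Cons.prems(4) by auto
    have key: "((\<forall>i\<in>I. x i \<noteq> 0) \<and> (\<Sum>i\<in>I. c i * x i) = 0 \<and> sum x I = 0)
       = ((\<forall>i\<in>I. x i \<noteq> 0) \<and> sum x I = 0)" for x :: "nat \<Rightarrow> 'a"
    proof -
      have "(\<Sum>i\<in>I. c i * x i) = v * sum x I"
        using cv by (simp add: sum_distrib_left)
      then show ?thesis by auto
    qed
    have "Tc I c = nzc I (0::'a)" unfolding Tc_def nzc_def key ..
    moreover have "{i\<in>I. c i = v} = I" using cv by auto
    ultimately show ?thesis using Nil nzc_psi_phi[OF Cons.prems(3), of "0::'a"] by simp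
  next
    case (Cons v' vs')
    define I' where "I' = {i\<in>I. c i \<noteq> v}"
    have finI': "finite I'" using Cons.prems(3) by (simp add: I'_def)
    have vnot: "v \<notin> set vs" using Cons.prems(1) by simp
    have sub: "c ` I' \<subseteq> set vs" using Cons.prems(4) by (auto simp: I'_def)
    have IH: "int (Tc I' c) = Arev TYPE('a) (map (\<lambda>u. card {i\<in>I'. c i = u}) vs)"
      by (rule Cons.IH) (use Cons.prems(1) Cons finI' sub in auto)
    have mapeq: "map (\<lambda>u. card {i\<in>I'. c i = u}) vs = map (\<lambda>u. card {i\<in>I. c i = u}) vs"
    proof (rule map_cong[OF refl])
      fix u assume "u \<in> set vs"
      then have "u \<noteq> v" using vnot by auto
      then have "{i\<in>I'. c i = u} = {i\<in>I. c i = u}" by (auto simp: I'_def)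
      then show "card {i\<in>I'. c i = u} = card {i\<in>I. c i = u}" by simp
    qed
    have sl: "sum_list (map (\<lambda>u. card {i\<in>I. c i = u}) vs) = card I'"
      using card_partition_list[OF _ finI' sub, of] Cons.prems(1) mapeq by simp
    have "int (Tc I c) = psi TYPE('a) (card I') * phi TYPE('a) (card {i\<in>I. c i = v})
       + (-1) ^ card {i\<in>I. c i = v} * int (Tc I' c)"
      using Tc_step[OF Cons.prems(3), of c v] Tc_shift[of I' c v] by (simp add: I'_def)
    also have "\<dots> = Arev TYPE('a) (map (\<lambda>u. card {i\<in>I. c i = u}) (v # vs))"
      using IH[unfolded mapeq] sl Cons by simp
    finally show ?thesis .
  qed
qed

lemma card_restrict_indep:
  fixes Q :: "(nat \<Rightarrow> 'a::finite) \<Rightarrow> bool"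
  assumes "finite H" "finite K" "H \<inter> K = {}"
    and indep: "\<And>y z. Q (\<lambda>i. if i \<in> H then y i else z i) = Q y"
  shows "card {x \<in> (H \<union> K) \<rightarrow>\<^sub>E (UNIV::'a set). Q x}
       = card {y \<in> H \<rightarrow>\<^sub>E (UNIV::'a set). Q y} * card (UNIV::'a set) ^ card K"
proof -
  have "card {x \<in> (H \<union> K) \<rightarrow>\<^sub>E (UNIV::'a set). Q x}
      = (\<Sum>y\<in>H \<rightarrow>\<^sub>E UNIV. card {z \<in> K \<rightarrow>\<^sub>E (UNIV::'a set). Q (\<lambda>i. if i \<in> H then y i else z i)})"
    by (rule split_card[OF assms(1-3)])
  also have "\<dots> = (\<Sum>y\<in>H \<rightarrow>\<^sub>E UNIV. if Q y then card (UNIV::'a set) ^ card K else 0)"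
  proof (rule sum.cong[OF refl])
    fix y :: "nat \<Rightarrow> 'a"
    have "card (K \<rightarrow>\<^sub>E (UNIV::'a set)) = card (UNIV::'a set) ^ card K"
      using assms(2) by (simp add: card_PiE)
    then show "card {z \<in> K \<rightarrow>\<^sub>E (UNIV::'a set). Q (\<lambda>i. if i \<in> H then y i else z i)}
        = (if Q y then card (UNIV::'a set) ^ card K else 0)"
      unfolding indep by simp
  qed
  also have "\<dots> = card {y \<in> H \<rightarrow>\<^sub>E (UNIV::'a set). Q y} * card (UNIV::'a set) ^ card K"
  proof -
    have finPi: "finite (H \<rightarrow>\<^sub>E (UNIV::'a set))" using assms(1) by (simp add: finite_PiE)
    show ?thesis using sum_if_card[OF finPi, of Q "card (UNIV::'a set) ^ card K"] by simp
  qed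
  finally show ?thesis .
qed

lemma card_linear_zero:
  fixes a :: "nat \<Rightarrow> 'a::{finite,field}"
  assumes "finite H" "S \<subseteq> H" "j \<in> S" "a j \<noteq> 0"
  shows "card {y \<in> H \<rightarrow>\<^sub>E (UNIV::'a set). (\<Sum>i\<in>S. a i * y i) = 0}
       = card (UNIV::'a set) ^ (card H - 1)"
proof -
  have jH: "j \<in> H" using assms by auto
  have finS: "finite S" using assms finite_subset by blast
  have Heq: "H = insert j (H - {j})" using jH by auto
  have "card {y \<in> H \<rightarrow>\<^sub>E (UNIV::'a set). (\<Sum>i\<in>S. a i * y i) = 0}
     = card {y \<in> insert j (H - {j}) \<rightarrow>\<^sub>E (UNIV::'a set). (\<Sum>i\<in>S. a i * y i) = 0}"
    using Heq by simp
  also have "\<dots> = (\<Sum>y\<in>(H - {j}) \<rightarrow>\<^sub>E UNIV. card {t. (\<Sum>i\<in>S. a i * (y(j:=t)) i) = 0})"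
    by (rule insert_card) (use assms(1) in auto)
  also have "\<dots> = (\<Sum>y\<in>(H - {j}) \<rightarrow>\<^sub>E (UNIV::'a set). 1)"
  proof (rule sum.cong[OF refl])
    fix y :: "nat \<Rightarrow> 'a"
    let ?C = "\<Sum>i\<in>S - {j}. a i * y i"
    have e: "(\<Sum>i\<in>S. a i * (y(j:=t)) i) = a j * t + ?C" for t
    proof -
      have "(\<Sum>i\<in>S. a i * (y(j:=t)) i) = a j * (y(j:=t)) j + (\<Sum>i\<in>S - {j}. a i * (y(j:=t)) i)"
        by (rule sum.remove[OF finS assms(3)])
      also have "(\<Sum>i\<in>S - {j}. a i * (y(j:=t)) i) = ?C" by (rule sum.cong) auto
      finally show ?thesis by simp
    qed
    have "{t. (\<Sum>i\<in>S. a i * (y(j:=t)) i) = 0} = {- ?C / a j}"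
      unfolding e using assms(4) by (auto simp: field_simps eq_neg_iff_add_eq_0)
    then show "card {t. (\<Sum>i\<in>S. a i * (y(j:=t)) i) = 0} = 1" by simp
  qed
  also have "\<dots> = card (UNIV::'a set) ^ (card H - 1)"
    using assms(1) jH by (simp add: card_PiE)
  finally show ?thesis .
qed

lemma card_linear_allnz:
  fixes a :: "nat \<Rightarrow> 'a::{finite,field}"
  assumes "finite H" "S \<subseteq> H" "\<forall>i\<in>S. a i \<noteq> 0"
  shows "int (card {y \<in> H \<rightarrow>\<^sub>E (UNIV::'a set). (\<Sum>i\<in>S. a i * y i) = 0 \<and> (\<forall>i\<in>H. y i \<noteq> 0)})
       = (int (card (UNIV::'a set)) - 1) ^ (card H - card S) * psi TYPE('a) (card S)"
proof -
  have finS: "finite S" using assms finite_subset by blast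
  have finD: "finite (H - S)" using assms by auto
  have Heq: "H = S \<union> (H - S)" using assms by auto
  have disj: "S \<inter> (H - S) = {}" by auto
  let ?P = "\<lambda>y::nat\<Rightarrow>'a. (\<Sum>i\<in>S. a i * y i) = 0 \<and> (\<forall>i\<in>H. y i \<noteq> 0)"
  have "card {y \<in> H \<rightarrow>\<^sub>E (UNIV::'a set). ?P y} = card {y \<in> (S \<union> (H - S)) \<rightarrow>\<^sub>E (UNIV::'a set). ?P y}"
    using Heq by simp
  also have "\<dots> = (\<Sum>y\<in>S \<rightarrow>\<^sub>E UNIV. card {z \<in> (H - S) \<rightarrow>\<^sub>E (UNIV::'a set). ?P (\<lambda>i. if i \<in> S then y i else z i)})"
    by (rule split_card[OF finS finD disj])
  also have "\<dots> = (\<Sum>y\<in>S \<rightarrow>\<^sub>E (UNIV::'a set). if (\<forall>i\<in>S. y i \<noteq> 0) \<and> (\<Sum>i\<in>S. a i * y i) = 0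
        then (card (UNIV::'a set) - 1) ^ card (H - S) else 0)"
  proof (rule sum.cong[OF refl])
    fix y :: "nat \<Rightarrow> 'a"
    have key: "?P (\<lambda>i. if i \<in> S then y i else z i) \<longleftrightarrow>
        ((\<forall>i\<in>S. y i \<noteq> 0) \<and> (\<Sum>i\<in>S. a i * y i) = 0) \<and> (\<forall>i\<in>H - S. z i \<noteq> 0)" for z
    proof -
      have "(\<Sum>i\<in>S. a i * (if i \<in> S then y i else z i)) = (\<Sum>i\<in>S. a i * y i)"
        by (rule sum.cong) auto
      moreover have "(\<forall>i\<in>H. (if i \<in> S then y i else z i) \<noteq> 0) \<longleftrightarrow>
          (\<forall>i\<in>S. y i \<noteq> 0) \<and> (\<forall>i\<in>H - S. z i \<noteq> 0)"
        using assms(2) by auto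
      ultimately show ?thesis by auto
    qed
    show "card {z \<in> (H - S) \<rightarrow>\<^sub>E (UNIV::'a set). ?P (\<lambda>i. if i \<in> S then y i else z i)}
      = (if (\<forall>i\<in>S. y i \<noteq> 0) \<and> (\<Sum>i\<in>S. a i * y i) = 0
        then (card (UNIV::'a set) - 1) ^ card (H - S) else 0)"
    proof (cases "(\<forall>i\<in>S. y i \<noteq> 0) \<and> (\<Sum>i\<in>S. a i * y i) = 0")
      case True
      have A: "(\<forall>i\<in>S. y i \<noteq> 0) \<longleftrightarrow> True" "(\<Sum>i\<in>S. a i * y i) = 0 \<longleftrightarrow> True"
        using True by auto
      show ?thesis unfolding key A simp_thms if_True by (rule card_allnz[OF finD])
    next
      case False
      then have "{z \<in> (H - S) \<rightarrow>\<^sub>E (UNIV::'a set). ((\<forall>i\<in>S. y i \<noteq> 0) \<and> (\<Sum>i\<in>S. a i * y i) = 0)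
          \<and> (\<forall>i\<in>H - S. z i \<noteq> 0)} = {}" using False by auto
      note E = this
      have A: "((\<forall>i\<in>S. y i \<noteq> 0) \<and> (\<Sum>i\<in>S. a i * y i) = 0) \<longleftrightarrow> False"
        using False by simp
      show ?thesis unfolding key E A if_False by simp
    qed
  qed
  also have "\<dots> = card {y \<in> S \<rightarrow>\<^sub>E (UNIV::'a set). (\<forall>i\<in>S. y i \<noteq> 0) \<and> (\<Sum>i\<in>S. a i * y i) = 0}
      * (card (UNIV::'a set) - 1) ^ card (H - S)"
  proof -
    have finPi: "finite (S \<rightarrow>\<^sub>E (UNIV::'a set))" using finS by (simp add: finite_PiE)
    show ?thesis using sum_if_card[OF finPi, of "\<lambda>y. (\<forall>i\<in>S. y i \<noteq> 0) \<and> (\<Sum>i\<in>S. a i * y i) = 0"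
      "(card (UNIV::'a set) - 1) ^ card (H - S)"] by simp
  qed
  finally have 1: "card {y \<in> H \<rightarrow>\<^sub>E (UNIV::'a set). ?P y} =
      card {y \<in> S \<rightarrow>\<^sub>E (UNIV::'a set). (\<forall>i\<in>S. y i \<noteq> 0) \<and> (\<Sum>i\<in>S. a i * y i) = 0}
      * (card (UNIV::'a set) - 1) ^ card (H - S)" .
  have 2: "int (card {y \<in> S \<rightarrow>\<^sub>E (UNIV::'a set). (\<forall>i\<in>S. y i \<noteq> 0) \<and> (\<Sum>i\<in>S. a i * y i) = 0})
      = psi TYPE('a) (card S)"
    by (rule card_B_psi[OF finS assms(3)])
  have 3: "card (UNIV::'a set) \<ge> 1" using finite_UNIV_card_ge_0[where 'a='a] by simp
  have 4: "card (H - S) = card H - card S" using assms(2) finS by (simp add: card_Diff_subset)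
  show ?thesis unfolding 1 using 2 3 4 by (simp add: of_nat_diff)
qed

lemma Tc_A_ext:
  fixes a :: "nat \<Rightarrow> 'a::{finite,field}"
  assumes "S \<subseteq> {1..h}" and "card S = s" and "1 \<le> s"
    and "\<forall>i\<in>S. a i \<noteq> 0"
    and "distinct vs" and "set vs = a ` S"
    and "r = map (\<lambda>v. card {i \<in> S. a i = v}) vs"
  shows "int (Tc {1..h} (\<lambda>i. if i \<in> S then a i else 0)) = A_ext TYPE('a) r (h - s)"
proof -
  define H where "H = {1..h}"
  define c' where "c' = (\<lambda>i. if i \<in> S then a i else 0)"
  have finH: "finite H" by (simp add: H_def)
  have SH: "S \<subseteq> H" using assms(1) by (simp add: H_def)
  have finS: "finite S" using SH finH finite_subset by blast
  have cardH: "card H = h" by (simp add: H_def)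
  have Sne: "S \<noteq> {}" using assms(2,3) by auto
  have vsne: "vs \<noteq> []" using assms(6) Sne by auto
  have z: "0 \<notin> set vs" using assms(4,6) by auto
  have cnt: "card {i\<in>H. c' i = v} = card {i\<in>S. a i = v}" if "v \<in> set vs" for v
  proof -
    have "v \<noteq> 0" using that z by auto
    then have "{i\<in>H. c' i = v} = {i\<in>S. a i = v}" using SH by (auto simp: c'_def)
    then show ?thesis by simp
  qed
  have mapr: "map (\<lambda>v. card {i\<in>H. c' i = v}) vs = r"
    unfolding assms(7) by (rule map_cong[OF refl]) (rule cnt)
  have cnt0: "card {i\<in>H. c' i = 0} = h - s"
  proof -
    have "{i\<in>H. c' i = 0} = H - S" using assms(4) SH by (auto simp: c'_def)
    then show ?thesis using SH finS cardH assms(2) by (simp add: card_Diff_subset)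
  qed
  show ?thesis
  proof (cases "h - s = 0")
    case True
    have "card S = card H" using True assms(2) cardH card_mono[OF finH SH] by simp
    then have HS: "H = S" using card_subset_eq[OF finH SH] by simp
    have sub: "c' ` H \<subseteq> set (rev vs)" using assms(6) HS by (auto simp: c'_def)
    have "int (Tc H c') = Arev TYPE('a) (map (\<lambda>v. card {i\<in>H. c' i = v}) (rev vs))"
      by (rule Tc_Arev) (use assms(5) vsne finH sub in auto)
    also have "\<dots> = Arev TYPE('a) (rev r)" unfolding rev_map[symmetric] mapr ..
    finally show ?thesis using True by (simp add: A_ext_def A_def H_def c'_def)
  next
    case False
    have sub: "c' ` H \<subseteq> set (rev (vs @ [0]))" using assms(6) by (auto simp: c'_def)
    have "int (Tc H c') = Arev TYPE('a) (map (\<lambda>v. card {i\<in>H. c' i = v}) (rev (vs @ [0])))"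
      by (rule Tc_Arev) (use assms(5) z finH sub in auto)
    also have "\<dots> = Arev TYPE('a) (rev (r @ [h - s]))"
      unfolding rev_map[symmetric] using mapr cnt0 by simp
    finally show ?thesis using False by (simp add: A_ext_def A_def H_def c'_def)
  qed
qed

theorem proposition2p4:
  fixes h k s :: nat and S :: "nat set" and a :: "nat \<Rightarrow> 'a::{finite,field}"
    and vs :: "'a list" and r :: "nat list"
  assumes "4 \<le> h" and "h \<le> k"
    and "S \<subseteq> {1..h}" and "card S = s" and "1 \<le> s"
    and "\<forall>i\<in>S. a i \<noteq> 0"
    and "distinct vs" and "set vs = a ` S"
    and "r = map (\<lambda>v. card {i \<in> S. a i = v}) vs"
  shows "int (card {x \<in> {1..k} \<rightarrow>\<^sub>E (UNIV::'a set).
            (\<Sum>i\<in>S. a i * x i) = 0 \<and> (\<Sum>i=1..h. x i) * (\<Prod>i=1..h. x i) = 0})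
       = int (card (UNIV::'a set)) ^ (k - 1)
         - (int (card (UNIV::'a set)) - 1) ^ (h - s) * int (card (UNIV::'a set)) ^ (k - h) * psi TYPE('a) s
         + int (card (UNIV::'a set)) ^ (k - h) * A_ext TYPE('a) r (h - s)"
proof -
  define H where "H = {1..h}"
  define K where "K = {Suc h..k}"
  define q where "q = card (UNIV::'a set)"
  let ?Q = "\<lambda>x::nat\<Rightarrow>'a. (\<Sum>i\<in>S. a i * x i) = 0 \<and> (\<Sum>i=1..h. x i) * (\<Prod>i=1..h. x i) = 0"
  let ?L = "\<lambda>x::nat\<Rightarrow>'a. (\<Sum>i\<in>S. a i * x i) = 0"
  let ?N = "\<lambda>x::nat\<Rightarrow>'a. (\<forall>i\<in>H. x i \<noteq> 0)"
  let ?X = "\<lambda>x::nat\<Rightarrow>'a. sum x H = 0"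
  let ?A = "H \<rightarrow>\<^sub>E (UNIV::'a set)"
  have finH: "finite H" and finK: "finite K" by (auto simp: H_def K_def)
  have SH: "S \<subseteq> H" using assms(3) by (simp add: H_def)
  have finS: "finite S" using SH finH finite_subset by blast
  have finA: "finite ?A" using finH by (simp add: finite_PiE)
  have cardH: "card H = h" by (simp add: H_def)
  have cardK: "card K = k - h" by (simp add: K_def)
  have disj: "H \<inter> K = {}" by (auto simp: H_def K_def)
  have HK: "{1..k} = H \<union> K" using assms(1,2) by (auto simp: H_def K_def)
  obtain j where j: "j \<in> S" using assms(4,5) by (metis card.empty ex_in_conv not_one_le_zero)
  have indep: "?Q (\<lambda>i. if i \<in> H then y i else z i) = ?Q y" for y z :: "nat \<Rightarrow> 'a"
  proof -
    have "(\<Sum>i\<in>S. a i * (if i \<in> H then y i else z i)) = (\<Sum>i\<in>S. a i * y i)"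
      using SH by (intro sum.cong) auto
    moreover have "(\<Sum>i=1..h. (if i \<in> H then y i else z i)) = (\<Sum>i=1..h. y i)"
      by (intro sum.cong) (auto simp: H_def)
    moreover have "(\<Prod>i=1..h. (if i \<in> H then y i else z i)) = (\<Prod>i=1..h. y i)"
      by (intro prod.cong) (auto simp: H_def)
    ultimately show ?thesis by simp
  qed
  have step1: "card {x \<in> {1..k} \<rightarrow>\<^sub>E (UNIV::'a set). ?Q x} = card {y \<in> ?A. ?Q y} * q ^ (k - h)"
    unfolding HK q_def cardK[symmetric] by (rule card_restrict_indep[OF finH finK disj indep])
  \<comment> \<open>Step 2: inclusion-exclusion on H\<close>
  have Qeq: "?Q y \<longleftrightarrow> ?L y \<and> \<not> (?N y \<and> \<not> ?X y)" for y
  proof -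
    have "(\<Prod>i=1..h. y i) = 0 \<longleftrightarrow> \<not> ?N y" by (simp add: H_def)
    moreover have "(\<Sum>i=1..h. y i) = sum y H" by (simp add: H_def)
    ultimately show ?thesis by auto
  qed
  have c1: "card {y \<in> ?A. ?L y} = card {y \<in> ?A. ?L y \<and> (?N y \<and> \<not> ?X y)} + card {y \<in> ?A. ?L y \<and> \<not> (?N y \<and> \<not> ?X y)}"
    by (rule card_split[OF finA])
  have c2: "card {y \<in> ?A. ?L y \<and> ?N y} = card {y \<in> ?A. (?L y \<and> ?N y) \<and> ?X y} + card {y \<in> ?A. (?L y \<and> ?N y) \<and> \<not> ?X y}"
    by (rule card_split[OF finA])
  have e1: "{y \<in> ?A. ?L y \<and> (?N y \<and> \<not> ?X y)} = {y \<in> ?A. (?L y \<and> ?N y) \<and> \<not> ?X y}" by blast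
  have e2: "{y \<in> ?A. ?Q y} = {y \<in> ?A. ?L y \<and> \<not> (?N y \<and> \<not> ?X y)}" unfolding Qeq ..
  have Lc: "card {y \<in> ?A. ?L y} = q ^ (h - 1)"
    using card_linear_zero[OF finH SH j, of a] assms(6) j by (simp add: cardH q_def)
  have LNc: "int (card {y \<in> ?A. ?L y \<and> ?N y}) = (int q - 1) ^ (h - s) * psi TYPE('a) s"
    using card_linear_allnz[OF finH SH assms(6)] by (simp add: cardH assms(4) q_def)
  have LNXc: "int (card {y \<in> ?A. (?L y \<and> ?N y) \<and> ?X y}) = A_ext TYPE('a) r (h - s)"
  proof -
    have "(\<Sum>i\<in>H. (if i \<in> S then a i else 0) * y i) = (\<Sum>i\<in>S. a i * y i)" for y :: "nat \<Rightarrow> 'a"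
    proof -
      have "(\<Sum>i\<in>H. (if i \<in> S then a i else 0) * y i) = (\<Sum>i\<in>H. if i \<in> S then a i * y i else 0)"
        by (rule sum.cong) auto
      also have "\<dots> = (\<Sum>i\<in>H \<inter> S. a i * y i)" by (rule sum.inter_restrict[OF finH, symmetric])
      also have "H \<inter> S = S" using SH by auto
      finally show ?thesis .
    qed
    then have "Tc H (\<lambda>i. if i \<in> S then a i else 0) = card {y \<in> ?A. (?L y \<and> ?N y) \<and> ?X y}"
      unfolding Tc_def by (intro arg_cong[where f=card]) auto
    then show ?thesis using Tc_A_ext[OF assms(3-9)] by (simp add: H_def)
  qed
  have main: "int (card {y \<in> ?A. ?Q y}) = int q ^ (h - 1) - (int q - 1) ^ (h - s) * psi TYPE('a) s
      + A_ext TYPE('a) r (h - s)"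
  proof -
    have "int (card {y \<in> ?A. ?Q y}) = int (card {y \<in> ?A. ?L y}) - int (card {y \<in> ?A. ?L y \<and> ?N y})
        + int (card {y \<in> ?A. (?L y \<and> ?N y) \<and> ?X y})"
    proof -
      have d1: "card {y \<in> ?A. ?L y} = card {y \<in> ?A. (?L y \<and> ?N y) \<and> \<not> ?X y} + card {y \<in> ?A. ?Q y}"
        using c1[unfolded e1] unfolding e2 .
      have d1': "int (card {y \<in> ?A. ?L y}) = int (card {y \<in> ?A. (?L y \<and> ?N y) \<and> \<not> ?X y}) + int (card {y \<in> ?A. ?Q y})"
        unfolding d1 by (rule of_nat_add)
      have d2': "int (card {y \<in> ?A. ?L y \<and> ?N y}) = int (card {y \<in> ?A. (?L y \<and> ?N y) \<and> ?X y}) + int (card {y \<in> ?A. (?L y \<and> ?N y) \<and> \<not> ?X y})"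
        unfolding c2 by (rule of_nat_add)
      show ?thesis using d1' d2' by linarith
    qed
    then show ?thesis unfolding Lc LNc LNXc by simp
  qed
  have qp: "int q ^ (k - h) * int q ^ (h - 1) = int q ^ (k - 1)"
  proof -
    have "k - h + (h - 1) = k - 1" using assms(1,2) by simp
    then show ?thesis by (metis power_add)
  qed
  have "int (card {x \<in> {1..k} \<rightarrow>\<^sub>E (UNIV::'a set). ?Q x}) = int q ^ (k - h) * int (card {y \<in> ?A. ?Q y})"
    unfolding step1 by simp
  also have "\<dots> = int q ^ (k - 1) - (int q - 1) ^ (h - s) * int q ^ (k - h) * psi TYPE('a) s
      + int q ^ (k - h) * A_ext TYPE('a) r (h - s)"
  proof -
    have gen: "P * (Q - R * S + T) = P * Q - R * P * S + P * T" for P Q R S T :: int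
      by (simp add: algebra_simps)
    show ?thesis unfolding main gen qp ..
  qed
  finally show ?thesis by (simp add: q_def)
qed

end
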